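(* Let $\{Y_n;\,n\ge1\}$ be a sequence of random variables with values in a real separable Banach space $\mathbf{B}$ such that $Y_n\to0$ in probability. Let $\{Y_n';\,n\ge1\}$ be an independent copy of $\{Y_n;\,n\ge1\}$ and set $\hat Y_n=Y_n-Y_n'$. Let $\{a_n;\,n\ge1\}$ be positive numbers with $a_n\to\infty$. If there exist constants $0\le\bar\gamma\le\underline\gamma\le\infty$ such that for all $s>0$ $$\limsup_{n\to\infty}\frac1{a_n}\log\mathbb{P}(\|\hat Y_n\|>s)=-\bar\gamma\quad\text{and}\quad\liminf_{n\to\infty}\frac1{a_n}\log\mathbb{P}(\|\hat Y_n\|>s)=-\underline\gamma,$$ then for all $s>0$ $$\limsup_{n\to\infty}\frac1{a_n}\log\mathbb{P}(\|Y_n\|>s)=-\bar\gamma\quad\text{and}\quad\liminf_{n\to\infty}\frac1{a_n}\log\mathbb{P}(\|Y_n\|>s)=-\underline\gamma.$$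
   Context: Convention: $\log0=-\infty$. *)

theory Defs
  imports "HOL-Probability.Probability"
begin

definition elog :: "real \<Rightarrow> ereal" where
  "elog p = (if p = 0 then -\<infinity> else ereal (ln p))"

definition log_tail :: "'a measure \<Rightarrow> real \<Rightarrow> ('a \<Rightarrow> 'b::real_normed_vector) \<Rightarrow> real \<Rightarrow> ereal" where
  "log_tail M a X s = ereal (1 / a) * elog (measure M {\<omega> \<in> space M. s < norm (X \<omega>)})"

end

theory Submission imports Defs begin


lemma key_pt:
  fixes p q C a e :: real
  assumes "0 \<le> p" "0 \<le> q" "0 < C" "p \<le> C * q" "0 < a" "ln C / a \<le> e"
  shows "ereal (1/a) * elog p \<le> ereal (1/a) * elog q + ereal e"
proof (cases "p = 0")
  case True
  then show ?thesis using assms by (simp add: elog_def)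
next
  case False
  then have pp: "p > 0" using assms by simp
  then have qq: "q > 0" using assms
    by (smt (verit) mult_nonneg_nonpos)
  have "ln p \<le> ln (C * q)" using pp qq assms by simp
  also have "\<dots> = ln C + ln q" using qq assms by (simp add: ln_mult)
  finally have "ln p / a \<le> ln q / a + ln C / a" using assms
    by (simp add: divide_right_mono add_divide_distrib[symmetric])
  then have "ln p / a \<le> ln q / a + e" using assms by linarith
  then show ?thesis using pp qq by (simp add: elog_def)
qed

lemma key:
  fixes p q a :: "nat \<Rightarrow> real" and C :: real
  assumes a_lim: "filterlim a at_top sequentially" and apos: "\<And>n. a n > 0" and C: "C > 0"
    and ev: "eventually (\<lambda>n. 0 \<le> p n \<and> 0 \<le> q n \<and> p n \<le> C * q n) sequentially"
  shows "limsup (\<lambda>n. ereal (1/a n) * elog (p n)) \<le> limsup (\<lambda>n. ereal (1/a n) * elog (q n))"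
    "liminf (\<lambda>n. ereal (1/a n) * elog (p n)) \<le> liminf (\<lambda>n. ereal (1/a n) * elog (q n))"
proof -
  have E: "eventually (\<lambda>n. ereal (1/a n) * elog (p n) \<le> ereal (1/a n) * elog (q n) + ereal e) sequentially"
    if e: "e > 0" for e
  proof -
    have "eventually (\<lambda>n. a n \<ge> \<bar>ln C\<bar> / e) sequentially"
      using a_lim by (simp add: filterlim_at_top)
    then show ?thesis using ev
    proof eventually_elim
      case (elim n)
      have "ln C / a n \<le> e"
        using elim apos[of n] e by (smt (verit) divide_le_eq mult.commute pos_divide_le_eq abs_ge_self)
      then show ?case using elim apos[of n] C key_pt by blast
    qed
  qed
  show "limsup (\<lambda>n. ereal (1/a n) * elog (p n)) \<le> limsup (\<lambda>n. ereal (1/a n) * elog (q n))"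
  proof (rule ereal_le_epsilon2)
    fix e :: real assume "e > 0"
    have "limsup (\<lambda>n. ereal (1/a n) * elog (p n)) \<le> limsup (\<lambda>n. ereal (1/a n) * elog (q n) + ereal e)"
      by (rule Limsup_mono[OF E[OF \<open>e>0\<close>]])
    also have "\<dots> = limsup (\<lambda>n. ereal (1/a n) * elog (q n)) + ereal e"
      by (rule Limsup_add_ereal_right) auto
    finally show "limsup (\<lambda>n. ereal (1/a n) * elog (p n)) \<le> limsup (\<lambda>n. ereal (1/a n) * elog (q n)) + ereal e" .
  qed
  show "liminf (\<lambda>n. ereal (1/a n) * elog (p n)) \<le> liminf (\<lambda>n. ereal (1/a n) * elog (q n))"
  proof (rule ereal_le_epsilon2)
    fix e :: real assume "e > 0"
    have "liminf (\<lambda>n. ereal (1/a n) * elog (p n)) \<le> liminf (\<lambda>n. ereal (1/a n) * elog (q n) + ereal e)"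
      by (rule Liminf_mono[OF E[OF \<open>e>0\<close>]])
    also have "\<dots> = liminf (\<lambda>n. ereal (1/a n) * elog (q n)) + ereal e"
      by (rule Liminf_add_ereal_right) auto
    finally show "liminf (\<lambda>n. ereal (1/a n) * elog (p n)) \<le> liminf (\<lambda>n. ereal (1/a n) * elog (q n)) + ereal e" .
  qed
qed

lemma main:
  fixes M :: "'a measure"
    and Y Y' :: "nat \<Rightarrow> 'a \<Rightarrow> 'b::{banach, second_countable_topology}"
  assumes "prob_space M"
    and Y_meas: "\<And>n. Y n \<in> borel_measurable M"
    and Y'_meas: "\<And>n. Y' n \<in> borel_measurable M"
    and Y_prob0: "\<And>\<epsilon>. \<epsilon> > 0 \<Longrightarrow>
        (\<lambda>n. measure M {\<omega> \<in> space M. \<epsilon> < norm (Y n \<omega>)}) \<longlonglongrightarrow> 0"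
    and indep: "prob_space.indep_var M
        (PiM UNIV (\<lambda>_. borel)) (\<lambda>\<omega> n. Y n \<omega>)
        (PiM UNIV (\<lambda>_. borel)) (\<lambda>\<omega> n. Y' n \<omega>)"
    and copy: "distr M (PiM UNIV (\<lambda>_. borel)) (\<lambda>\<omega> n. Y n \<omega>)
             = distr M (PiM UNIV (\<lambda>_. borel)) (\<lambda>\<omega> n. Y' n \<omega>)"
  shows "\<And>n c. measure M {\<omega> \<in> space M. c < norm (Y' n \<omega>)} = measure M {\<omega> \<in> space M. c < norm (Y n \<omega>)}"
    and "\<And>s. s > 0 \<Longrightarrow> eventually (\<lambda>n. measure M {\<omega> \<in> space M. s < norm (Y n \<omega> - Y' n \<omega>)}
               \<le> 2 * measure M {\<omega> \<in> space M. s/2 < norm (Y n \<omega>)}) sequentially"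
    and "\<And>s t. s > 0 \<Longrightarrow> t > 0 \<Longrightarrow> eventually (\<lambda>n. measure M {\<omega> \<in> space M. s + t < norm (Y n \<omega>)}
               \<le> 2 * measure M {\<omega> \<in> space M. s < norm (Y n \<omega> - Y' n \<omega>)}) sequentially"
proof -
  interpret prob_space M by fact
  have YV: "(\<lambda>\<omega> n. Y n \<omega>) \<in> measurable M (PiM UNIV (\<lambda>_. borel))"
    by (rule measurable_PiM_single') (auto simp: Y_meas)
  have YV': "(\<lambda>\<omega> n. Y' n \<omega>) \<in> measurable M (PiM UNIV (\<lambda>_. borel))"
    by (rule measurable_PiM_single') (auto simp: Y'_meas)
  have D: "distr M borel (Y n) = distr M borel (Y' n)" for n
  proof -
    have "distr M borel (Y n) = distr (distr M (PiM UNIV (\<lambda>_. borel)) (\<lambda>\<omega> n. Y n \<omega>)) borel (\<lambda>x. x n)"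
      using YV by (subst distr_distr) (auto simp: comp_def)
    also have "\<dots> = distr (distr M (PiM UNIV (\<lambda>_. borel)) (\<lambda>\<omega> n. Y' n \<omega>)) borel (\<lambda>x. x n)"
      using copy by simp
    also have "\<dots> = distr M borel (Y' n)"
      using YV' by (subst distr_distr) (auto simp: comp_def)
    finally show ?thesis .
  qed
  show C: "measure M {\<omega> \<in> space M. c < norm (Y' n \<omega>)} = measure M {\<omega> \<in> space M. c < norm (Y n \<omega>)}" for n c
  proof -
    have S: "{x. c < norm x} \<in> sets (borel :: 'b measure)" by measurable
    have "measure M {\<omega> \<in> space M. c < norm (Y' n \<omega>)} = measure (distr M borel (Y' n)) {x. c < norm x}"
      using Y'_meas S by (subst measure_distr) (auto intro!: arg_cong[where f="measure M"])
    also have "\<dots> = measure (distr M borel (Y n)) {x. c < norm x}" using D by simp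
    also have "\<dots> = measure M {\<omega> \<in> space M. c < norm (Y n \<omega>)}"
      using Y_meas S by (subst measure_distr) (auto intro!: arg_cong[where f="measure M"])
    finally show ?thesis .
  qed
  show "eventually (\<lambda>n. measure M {\<omega> \<in> space M. s < norm (Y n \<omega> - Y' n \<omega>)}
               \<le> 2 * measure M {\<omega> \<in> space M. s/2 < norm (Y n \<omega>)}) sequentially" if "s > 0" for s
  proof (rule always_eventually, rule allI)
    fix n
    have "measure M {\<omega> \<in> space M. s < norm (Y n \<omega> - Y' n \<omega>)}
       \<le> measure M ({\<omega> \<in> space M. s/2 < norm (Y n \<omega>)} \<union> {\<omega> \<in> space M. s/2 < norm (Y' n \<omega>)})"
    proof (rule finite_measure_mono)
      show "{\<omega> \<in> space M. s < norm (Y n \<omega> - Y' n \<omega>)} \<subseteq> {\<omega> \<in> space M. s/2 < norm (Y n \<omega>)} \<union> {\<omega> \<in> space M. s/2 < norm (Y' n \<omega>)}"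
      proof
        fix \<omega> assume "\<omega> \<in> {\<omega> \<in> space M. s < norm (Y n \<omega> - Y' n \<omega>)}"
        moreover have "norm (Y n \<omega> - Y' n \<omega>) \<le> norm (Y n \<omega>) + norm (Y' n \<omega>)" by (rule norm_triangle_ineq4)
        ultimately show "\<omega> \<in> {\<omega> \<in> space M. s/2 < norm (Y n \<omega>)} \<union> {\<omega> \<in> space M. s/2 < norm (Y' n \<omega>)}"
          by auto
      qed
      show "{\<omega> \<in> space M. s/2 < norm (Y n \<omega>)} \<union> {\<omega> \<in> space M. s/2 < norm (Y' n \<omega>)} \<in> sets M"
        using Y_meas Y'_meas by measurable
    qed
    also have "\<dots> \<le> measure M {\<omega> \<in> space M. s/2 < norm (Y n \<omega>)} + measure M {\<omega> \<in> space M. s/2 < norm (Y' n \<omega>)}"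
      using Y_meas Y'_meas by (intro measure_Un_le; measurable)
    finally show "measure M {\<omega> \<in> space M. s < norm (Y n \<omega> - Y' n \<omega>)}
               \<le> 2 * measure M {\<omega> \<in> space M. s/2 < norm (Y n \<omega>)}" using C[of "s/2" n] by linarith
  qed
  show "eventually (\<lambda>n. measure M {\<omega> \<in> space M. s + t < norm (Y n \<omega>)}
               \<le> 2 * measure M {\<omega> \<in> space M. s < norm (Y n \<omega> - Y' n \<omega>)}) sequentially"
    if "s > 0" "t > 0" for s t
  proof -
    have "eventually (\<lambda>n. measure M {\<omega> \<in> space M. t < norm (Y n \<omega>)} < 1/2) sequentially"
      using Y_prob0[OF \<open>t > 0\<close>] by (rule order_tendstoD) simp
    then show ?thesis
    proof eventually_elim
      case (elim n)
      have I: "indep_var borel ((\<lambda>x. x n) \<circ> (\<lambda>\<omega> n. Y n \<omega>)) borel ((\<lambda>x. x n) \<circ> (\<lambda>\<omega> n. Y' n \<omega>))"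
        by (rule indep_var_compose[OF indep]) auto
      have I': "indep_var borel (Y n) borel (Y' n)"
        using I by (simp add: comp_def)
      have S1: "{x. s + t < norm x} \<in> sets (borel :: 'b measure)" by measurable
      have S2: "{x. norm x \<le> t} \<in> sets (borel :: 'b measure)" by measurable
      have P: "prob ((\<lambda>x. (Y n x, Y' n x)) -` ({x. s + t < norm x} \<times> {x. norm x \<le> t}) \<inter> space M) =
          prob (Y n -` {x. s + t < norm x} \<inter> space M) * prob (Y' n -` {x. norm x \<le> t} \<inter> space M)"
        by (rule indep_varD[OF I' S1 S2])
      have P2: "prob (Y' n -` {x. norm x \<le> t} \<inter> space M) = 1 - prob {\<omega> \<in> space M. t < norm (Y' n \<omega>)}"
      proof -
        have "Y' n -` {x. norm x \<le> t} \<inter> space M = space M - {\<omega> \<in> space M. t < norm (Y' n \<omega>)}" by auto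
        moreover have "{\<omega> \<in> space M. t < norm (Y' n \<omega>)} \<in> events" using Y'_meas by measurable
        ultimately show ?thesis by (simp add: prob_compl)
      qed
      have half: "prob (Y' n -` {x. norm x \<le> t} \<inter> space M) \<ge> 1/2"
        using P2 C[of t n] elim by simp
      have sub: "(\<lambda>x. (Y n x, Y' n x)) -` ({x. s + t < norm x} \<times> {x. norm x \<le> t}) \<inter> space M
          \<subseteq> {\<omega> \<in> space M. s < norm (Y n \<omega> - Y' n \<omega>)}"
      proof
        fix \<omega> assume "\<omega> \<in> (\<lambda>x. (Y n x, Y' n x)) -` ({x. s + t < norm x} \<times> {x. norm x \<le> t}) \<inter> space M"
        moreover have "norm (Y n \<omega>) - norm (Y' n \<omega>) \<le> norm (Y n \<omega> - Y' n \<omega>)" by (rule norm_triangle_ineq2)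
        ultimately show "\<omega> \<in> {\<omega> \<in> space M. s < norm (Y n \<omega> - Y' n \<omega>)}" by auto
      qed
      have "prob (Y n -` {x. s + t < norm x} \<inter> space M) * (1/2)
          \<le> prob (Y n -` {x. s + t < norm x} \<inter> space M) * prob (Y' n -` {x. norm x \<le> t} \<inter> space M)"
        using half by (intro mult_left_mono) auto
      also have "\<dots> \<le> prob {\<omega> \<in> space M. s < norm (Y n \<omega> - Y' n \<omega>)}"
        unfolding P[symmetric]
        by (rule finite_measure_mono[OF sub]) (use Y_meas Y'_meas in measurable)
      finally have "prob (Y n -` {x. s + t < norm x} \<inter> space M) \<le> 2 * prob {\<omega> \<in> space M. s < norm (Y n \<omega> - Y' n \<omega>)}"
        by simp
      moreover have "Y n -` {x. s + t < norm x} \<inter> space M = {\<omega> \<in> space M. s + t < norm (Y n \<omega>)}" by auto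
      ultimately show ?case by simp
    qed
  qed
qed



theorem lemma3p2:
  fixes M :: "'a measure"
    and Y Y' :: "nat \<Rightarrow> 'a \<Rightarrow> 'b::{banach, second_countable_topology}"
    and a :: "nat \<Rightarrow> real"
    and \<gamma>sup \<gamma>inf :: ereal
  assumes "prob_space M"
    and Y_meas: "\<And>n. Y n \<in> borel_measurable M"
    and Y'_meas: "\<And>n. Y' n \<in> borel_measurable M"
    and Y_prob0: "\<And>\<epsilon>. \<epsilon> > 0 \<Longrightarrow>
        (\<lambda>n. measure M {\<omega> \<in> space M. \<epsilon> < norm (Y n \<omega>)}) \<longlonglongrightarrow> 0"
    and indep: "prob_space.indep_var M
        (PiM UNIV (\<lambda>_. borel)) (\<lambda>\<omega> n. Y n \<omega>)
        (PiM UNIV (\<lambda>_. borel)) (\<lambda>\<omega> n. Y' n \<omega>)"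
    and copy: "distr M (PiM UNIV (\<lambda>_. borel)) (\<lambda>\<omega> n. Y n \<omega>)
             = distr M (PiM UNIV (\<lambda>_. borel)) (\<lambda>\<omega> n. Y' n \<omega>)"
    and a_pos: "\<And>n. a n > 0"
    and a_lim: "filterlim a at_top sequentially"
    and gam: "0 \<le> \<gamma>sup" "\<gamma>sup \<le> \<gamma>inf"
    and hyp_sup: "\<And>s. s > 0 \<Longrightarrow>
        limsup (\<lambda>n. log_tail M (a n) (\<lambda>\<omega>. Y n \<omega> - Y' n \<omega>) s) = - \<gamma>sup"
    and hyp_inf: "\<And>s. s > 0 \<Longrightarrow>
        liminf (\<lambda>n. log_tail M (a n) (\<lambda>\<omega>. Y n \<omega> - Y' n \<omega>) s) = - \<gamma>inf"
  shows "\<forall>s>0. limsup (\<lambda>n. log_tail M (a n) (Y n) s) = - \<gamma>sup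
              \<and> liminf (\<lambda>n. log_tail M (a n) (Y n) s) = - \<gamma>inf"
  proof (intro allI impI)
  fix s :: real assume s: "s > 0"
  interpret prob_space M by fact
  note m = main[OF assms(1) Y_meas Y'_meas Y_prob0 indep copy]
  define P where "P = (\<lambda>c n. measure M {\<omega> \<in> space M. c < norm (Y n \<omega>)})"
  define Q where "Q = (\<lambda>c n. measure M {\<omega> \<in> space M. c < norm (Y n \<omega> - Y' n \<omega>)})"
  have LY: "log_tail M (a n) (Y n) c = ereal (1 / a n) * elog (P c n)" for n c
    by (simp add: log_tail_def P_def)
  have LQ: "log_tail M (a n) (\<lambda>\<omega>. Y n \<omega> - Y' n \<omega>) c = ereal (1 / a n) * elog (Q c n)" for n c
    by (simp add: log_tail_def Q_def)
  have ev1: "eventually (\<lambda>n. 0 \<le> P (s/2 + s/2) n \<and> 0 \<le> Q (s/2) n \<and> P (s/2 + s/2) n \<le> 2 * Q (s/2) n) sequentially"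
    using m(3)[of "s/2" "s/2"] s unfolding P_def Q_def by (auto elim: eventually_mono)
  have ev2: "eventually (\<lambda>n. 0 \<le> Q (2 * s) n \<and> 0 \<le> P s n \<and> Q (2 * s) n \<le> 2 * P s n) sequentially"
    using m(2)[of "2 * s"] s unfolding P_def Q_def by (auto elim: eventually_mono)
  have ss: "s/2 + s/2 = s" by simp
  note k1 = key[OF a_lim a_pos _ ev1, unfolded ss]
  note k2 = key[OF a_lim a_pos _ ev2]
  have "limsup (\<lambda>n. log_tail M (a n) (Y n) s) = - \<gamma>sup"
  proof (rule antisym)
    show "limsup (\<lambda>n. log_tail M (a n) (Y n) s) \<le> - \<gamma>sup"
      using k1(1) hyp_sup[of "s/2"] s unfolding LY LQ by simp
    show "- \<gamma>sup \<le> limsup (\<lambda>n. log_tail M (a n) (Y n) s)"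
      using k2(1) hyp_sup[of "2 * s"] s unfolding LY LQ by simp
  qed
  moreover have "liminf (\<lambda>n. log_tail M (a n) (Y n) s) = - \<gamma>inf"
  proof (rule antisym)
    show "liminf (\<lambda>n. log_tail M (a n) (Y n) s) \<le> - \<gamma>inf"
      using k1(2) hyp_inf[of "s/2"] s unfolding LY LQ by simp
    show "- \<gamma>inf \<le> liminf (\<lambda>n. log_tail M (a n) (Y n) s)"
      using k2(2) hyp_inf[of "2 * s"] s unfolding LY LQ by simp
  qed
  ultimately show "limsup (\<lambda>n. log_tail M (a n) (Y n) s) = - \<gamma>sup
              \<and> liminf (\<lambda>n. log_tail M (a n) (Y n) s) = - \<gamma>inf" by blast
qed

end
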